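(* Let $n$ be the number of nodes of $G$, let $k$ be a positive integer and $2\le \ell\le k$. Let $C_\ell$ be a maximal connected subgraph of $G_k$ all of whose nodes have level $\ell$, and let $H_\ell$ consist of $C_\ell$ together with all its descendants in $G_k$. If $H_\ell$ is light, i.e. $|H_\ell|\le n^{\ell/k}$, then at most $n^{1/k}$ nodes $v\in C_\ell$ have a heavy right child, i.e. a right child $\mathrm{RC}(v)$ whose component $H_{\ell-1}$ (the maximal connected level-$(\ell-1)$ subgraph $C_{\ell-1}$ of $G_k$ containing $\mathrm{RC}(v)$ together with all its descendants in $G_k$) satisfies $|H_{\ell-1}|> n^{(\ell-1)/k}$.
   Context: Colored tree labelings. A colored tree labeling of a graph $G$ of bounded degree assigns to each node $v$ a parent $\mathrm{P}(v)$, a left child $\mathrm{LC}(v)$ and a right child $\mathrm{RC}(v)$, each a port number of $v$ or $\bot$ (a non-$\bot$ value is identified with the neighbor reached through that port; the non-$\bot$ values at $v$ are pairwise distinct), and a color $\chi_{\mathrm{in}}(v)\in\{R,B\}$. Hierarchical forest. Define $\mathrm{level}(v)=1$ if $\mathrm{RC}(v)=\bot$ and $\mathrm{level}(v)=1+\mathrm{level}(\mathrm{RC}(v))$ otherwise. For $k\ge1$, the hierarchical forest $G_k$ contains the edge $\{u,v\}$ iff $\mathrm{level}(u),\mathrm{level}(v)\le k$, $v=\mathrm{P}(u)$, and either ($u=\mathrm{LC}(v)$ and $\mathrm{level}(v)=\mathrm{level}(u)$) or ($u=\mathrm{RC}(v)$ and $\mathrm{level}(v)=\mathrm{level}(u)+1$);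 it is viewed as directed from $v$ (parent) to $u$ (child), and descendants are taken along these directed edges. Labels whose corresponding edge is not in $G_k$ are treated as $\bot$. Each maximal connected subgraph of $G_k$ whose nodes all have the same level is a directed path or cycle along $\mathrm{LC}$-edges. *)

theory Defs
  imports Complex_Main "HOL-Library.Extended_Nat"
begin

datatype color = R | B

text \<open>A finite simple graph on the node set V with symmetric irreflexive adjacency E.
  Port numbers are identified with the neighbours they lead to, so a label is
  an optional neighbour.\<close>

definition simple_graph :: "'a set \<Rightarrow> ('a \<Rightarrow> 'a \<Rightarrow> bool) \<Rightarrow> bool" where
  "simple_graph V E \<longleftrightarrow> finite V \<and> (\<forall>u v. E u v \<longrightarrow> E v u) \<and> (\<forall>u. \<not> E u u)
     \<and> (\<forall>u v. E u v \<longrightarrow> u \<in> V \<and> v \<in> V)"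

definition colored_tree_labeling ::
  "'a set \<Rightarrow> ('a \<Rightarrow> 'a \<Rightarrow> bool) \<Rightarrow> ('a \<Rightarrow> 'a option) \<Rightarrow> ('a \<Rightarrow> 'a option) \<Rightarrow> ('a \<Rightarrow> 'a option)
     \<Rightarrow> ('a \<Rightarrow> color) \<Rightarrow> bool" where
  "colored_tree_labeling V E P LC RC chi \<longleftrightarrow>
     (\<forall>v\<in>V. (\<forall>u. P v = Some u \<longrightarrow> E v u) \<and> (\<forall>u. LC v = Some u \<longrightarrow> E v u)
            \<and> (\<forall>u. RC v = Some u \<longrightarrow> E v u)
            \<and> (P v = LC v \<longrightarrow> P v = None) \<and> (P v = RC v \<longrightarrow> P v = None)
            \<and> (LC v = RC v \<longrightarrow> LC v = None))"

fun rc_iter :: "('a \<Rightarrow> 'a option) \<Rightarrow> nat \<Rightarrow> 'a \<Rightarrow> 'a option" where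
  "rc_iter RC 0 v = Some v"
| "rc_iter RC (Suc i) v = Option.bind (rc_iter RC i v) RC"

text \<open>level v = 1 if RC v = bot, else 1 + level (RC v); infinite if the RC-chain never ends.\<close>
definition level :: "('a \<Rightarrow> 'a option) \<Rightarrow> 'a \<Rightarrow> enat" where
  "level RC v = (if \<exists>m. rc_iter RC m v = None
                 then enat (LEAST m. rc_iter RC m v = None) else \<infinity>)"

definition gk_edge :: "('a \<Rightarrow> 'a option) \<Rightarrow> ('a \<Rightarrow> 'a option) \<Rightarrow> ('a \<Rightarrow> 'a option)
    \<Rightarrow> nat \<Rightarrow> 'a \<Rightarrow> 'a \<Rightarrow> bool" where
  "gk_edge P LC RC k v u \<longleftrightarrow>
     level RC u \<le> enat k \<and> level RC v \<le> enat k \<and> P u = Some v \<and>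
     ((LC v = Some u \<and> level RC v = level RC u) \<or>
      (RC v = Some u \<and> level RC v = level RC u + 1))"

definition same_level_comp :: "('a \<Rightarrow> 'a option) \<Rightarrow> ('a \<Rightarrow> 'a option) \<Rightarrow> ('a \<Rightarrow> 'a option)
    \<Rightarrow> nat \<Rightarrow> 'a \<Rightarrow> 'a set" where
  "same_level_comp P LC RC k c =
     {w. (c, w) \<in> {(x, y). (gk_edge P LC RC k x y \<or> gk_edge P LC RC k y x)
                          \<and> level RC x = level RC y}\<^sup>*}"

definition with_descendants :: "('a \<Rightarrow> 'a option) \<Rightarrow> ('a \<Rightarrow> 'a option) \<Rightarrow> ('a \<Rightarrow> 'a option)
    \<Rightarrow> nat \<Rightarrow> 'a set \<Rightarrow> 'a set" where
  "with_descendants P LC RC k S =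
     {w. \<exists>s\<in>S. (s, w) \<in> {(x, y). gk_edge P LC RC k x y}\<^sup>*}"

end

theory Submission
  imports Defs
begin

abbreviation GR where "GR P LC RC k \<equiv> {(x, y). gk_edge P LC RC k x y}"

lemma gk_parent: "gk_edge P LC RC k x y \<Longrightarrow> P y = Some x"
  by (simp add: gk_edge_def)

lemma gk_level: "gk_edge P LC RC k x y \<Longrightarrow> level RC y \<le> level RC x"
  unfolding gk_edge_def by (cases "level RC y") (auto simp: one_enat_def)

lemma rt_level: "(x, y) \<in> (GR P LC RC k)\<^sup>* \<Longrightarrow> level RC y \<le> level RC x"
  by (induction rule: rtrancl_induct) (auto dest: gk_level intro: order_trans)

lemma linear_anc:
  assumes "(a, w) \<in> (GR P LC RC k)\<^sup>*"
  shows "(b, w) \<in> (GR P LC RC k)\<^sup>* \<Longrightarrow> (a, b) \<in> (GR P LC RC k)\<^sup>* \<or> (b, a) \<in> (GR P LC RC k)\<^sup>*"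
  using assms
proof (induction arbitrary: b rule: rtrancl_induct)
  case base then show ?case by simp
next
  case (step y z)
  from step.prems show ?case
  proof (cases rule: rtranclE)
    case base
    then show ?thesis using step by (meson rtrancl.rtrancl_into_rtrancl)
  next
    case (step y')
    then have "y' = y" using step.hyps(2) by (auto dest!: gk_parent)
    then show ?thesis using step.IH step by blast
  qed
qed

lemma comp_level: "w \<in> same_level_comp P LC RC k c \<Longrightarrow> level RC w = level RC c"
  unfolding same_level_comp_def mem_Collect_eq
  by (induction rule: rtrancl_induct) auto

lemma comp_desc:
  assumes "P u = Some v" "level RC v \<noteq> level RC u" "w \<in> same_level_comp P LC RC k u"
  shows "(u, w) \<in> (GR P LC RC k)\<^sup>*"
  using assms(3) unfolding same_level_comp_def mem_Collect_eq
proof (induction rule: rtrancl_induct)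
  case base then show ?case by simp
next
  case (step x y)
  show ?case
  proof (cases "gk_edge P LC RC k x y")
    case True then show ?thesis using step by (simp add: rtrancl.rtrancl_into_rtrancl)
  next
    case False
    then have e: "gk_edge P LC RC k y x" "level RC x = level RC y" using step by auto
    from step.IH show ?thesis
    proof (cases rule: rtranclE)
      case base
      then have "y = v" using e assms(1) by (auto dest!: gk_parent)
      then show ?thesis using e base assms(2) by simp
    next
      case (step z)
      then have "z = y" using e by (auto dest!: gk_parent)
      then show ?thesis using step by simp
    qed
  qed
qed

lemma desc_V:
  assumes "colored_tree_labeling V E P LC RC chi" "simple_graph V E"
  shows "(x, y) \<in> (GR P LC RC k)\<^sup>* \<Longrightarrow> x \<in> V \<Longrightarrow> y \<in> V"
proof (induction rule: rtrancl_induct)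
  case base then show ?case .
next
  case (step y z)
  then show ?case using assms unfolding colored_tree_labeling_def simple_graph_def gk_edge_def
    by blast
qed

lemma comp_V:
  assumes "colored_tree_labeling V E P LC RC chi" "simple_graph V E" "c \<in> V"
  shows "w \<in> same_level_comp P LC RC k c \<Longrightarrow> w \<in> V"
  unfolding same_level_comp_def mem_Collect_eq
proof (induction rule: rtrancl_induct)
  case base then show ?case using assms by simp
next
  case (step y z)
  then show ?case using assms unfolding colored_tree_labeling_def simple_graph_def gk_edge_def
    by blast
qed

theorem mainTheorem7:
  fixes V :: "'a set" and E :: "'a \<Rightarrow> 'a \<Rightarrow> bool"
    and P LC RC :: "'a \<Rightarrow> 'a option" and chi :: "'a \<Rightarrow> color"
    and k l :: nat and c :: 'a
  assumes "simple_graph V E"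
    and "colored_tree_labeling V E P LC RC chi"
    and "k \<ge> 1" and "2 \<le> l" and "l \<le> k"
    and "c \<in> V" and "level RC c = enat l"
    and light: "real (card (with_descendants P LC RC k (same_level_comp P LC RC k c)))
                  \<le> real (card V) powr (real l / real k)"
  shows "real (card {v \<in> same_level_comp P LC RC k c.
            \<exists>u. RC v = Some u \<and> gk_edge P LC RC k v u \<and>
                real (card (with_descendants P LC RC k (same_level_comp P LC RC k u)))
                  > real (card V) powr ((real l - 1) / real k)})
         \<le> real (card V) powr (1 / real k)"
proof -
  define n where "n = real (card V)"
  define C where "C = same_level_comp P LC RC k c"
  define HL where "HL = with_descendants P LC RC k C"
  define H where "H = (\<lambda>u. with_descendants P LC RC k (same_level_comp P LC RC k u))"
  define S where "S = {v \<in> C. \<exists>u. RC v = Some u \<and> gk_edge P LC RC k v u \<and>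
                real (card (H u)) > n powr ((real l - 1) / real k)}"
  define f where "f = (\<lambda>v. the (RC v))"
  have finV: "finite V" using assms(1) by (simp add: simple_graph_def)
  have npos: "n > 0" using assms(6) finV by (simp add: n_def card_gt_0_iff; blast)
  have CV: "C \<subseteq> V" using comp_V[OF assms(2,1,6)] by (auto simp: C_def)
  have HLV: "HL \<subseteq> V" using CV desc_V[OF assms(2,1)] by (auto simp: HL_def with_descendants_def)
  have Sfacts: "RC v = Some (f v) \<and> gk_edge P LC RC k v (f v) \<and> v \<in> C \<and>
      real (card (H (f v))) > n powr ((real l - 1) / real k) \<and>
      level RC v = enat l \<and> level RC (f v) + 1 = enat l \<and> P (f v) = Some v" if vS: "v \<in> S" for v
  proof -
    obtain u where u: "RC v = Some u" "gk_edge P LC RC k v u"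
      "real (card (H u)) > n powr ((real l - 1) / real k)" "v \<in> C"
      using vS unfolding S_def by blast
    have "v \<in> V" using u(4) CV by blast
    then have "LC v \<noteq> Some u" using u(1) assms(2) unfolding colored_tree_labeling_def by auto
    have lv: "level RC v = enat l" using comp_level[of v] u(4) assms(7) by (simp add: C_def)
    have "level RC v = level RC u + 1" using u \<open>LC v \<noteq> Some u\<close> by (auto simp: gk_edge_def)
    then show ?thesis using u lv \<open>LC v \<noteq> Some u\<close> by (auto simp: f_def gk_edge_def)
  qed
  have Hsub: "H (f v) \<subseteq> {w. (f v, w) \<in> (GR P LC RC k)\<^sup>*}" if "v \<in> S" for v
  proof
    fix w assume "w \<in> H (f v)"
    then obtain s where s: "s \<in> same_level_comp P LC RC k (f v)" "(s, w) \<in> (GR P LC RC k)\<^sup>*"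
      by (auto simp: H_def with_descendants_def)
    have "level RC v \<noteq> level RC (f v)"
      using Sfacts[OF that] by (cases "level RC (f v)") (auto simp: one_enat_def)
    then have "(f v, s) \<in> (GR P LC RC k)\<^sup>*" using comp_desc Sfacts[OF that] s(1) by metis
    then show "w \<in> {w. (f v, w) \<in> (GR P LC RC k)\<^sup>*}" using s(2) by simp
  qed
  have HinHL: "H (f v) \<subseteq> HL" if "v \<in> S" for v
  proof
    fix w assume "w \<in> H (f v)"
    then have "(f v, w) \<in> (GR P LC RC k)\<^sup>*" using Hsub[OF that] by auto
    moreover have "(v, f v) \<in> GR P LC RC k" using Sfacts[OF that] by simp
    ultimately have "(v, w) \<in> (GR P LC RC k)\<^sup>*" by (meson converse_rtrancl_into_rtrancl)
    then show "w \<in> HL" using Sfacts[OF that] by (auto simp: HL_def with_descendants_def)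
  qed
  have noanc: False if "v1 \<in> S" "v2 \<in> S" "v1 \<noteq> v2" "(f v1, f v2) \<in> (GR P LC RC k)\<^sup>*" for v1 v2
  proof -
    have "f v1 \<noteq> f v2" using Sfacts[OF that(1)] Sfacts[OF that(2)] that(3) by auto
    with that(4) obtain z where z: "(f v1, z) \<in> (GR P LC RC k)\<^sup>*" "gk_edge P LC RC k z (f v2)"
      by (metis (no_types, lifting) case_prodD mem_Collect_eq rtranclE)
    have "z = v2" using z(2) Sfacts[OF that(2)] by (auto dest!: gk_parent)
    then have "level RC v2 \<le> level RC (f v1)" using rt_level[OF z(1)] by simp
    then show False using Sfacts[OF that(1)] Sfacts[OF that(2)]
      by (cases "level RC (f v1)") (auto simp: one_enat_def)
  qed
  have disj: "H (f v1) \<inter> H (f v2) = {}" if "v1 \<in> S" "v2 \<in> S" "v1 \<noteq> v2" for v1 v2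
  proof (rule ccontr)
    assume "H (f v1) \<inter> H (f v2) \<noteq> {}"
    then obtain w where "w \<in> H (f v1)" "w \<in> H (f v2)" by blast
    then have "(f v1, w) \<in> (GR P LC RC k)\<^sup>*" "(f v2, w) \<in> (GR P LC RC k)\<^sup>*"
      using Hsub that by blast+
    then show False using linear_anc noanc that by metis
  qed
  have finS: "finite S" using CV finV by (auto simp: S_def intro: finite_subset)
  have finH: "finite (H (f v))" if "v \<in> S" for v
    using HinHL[OF that] HLV finV by (meson finite_subset)
  have "(\<Sum>v\<in>S. real (card (H (f v)))) = real (card (\<Union>v\<in>S. H (f v)))"
    by (subst card_UN_disjoint) (use finS finH disj in auto)
  also have "\<dots> \<le> real (card HL)"
    using HinHL HLV finV by (auto intro!: card_mono intro: finite_subset)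
  also have "\<dots> \<le> n powr (real l / real k)" using light by (simp add: HL_def C_def n_def)
  also have "\<dots> = n powr ((real l - 1) / real k) * n powr (1 / real k)"
  proof -
    have "real l / real k = (real l - 1) / real k + 1 / real k" using assms(3)
      by (simp add: diff_divide_distrib)
    then show ?thesis by (simp add: powr_add)
  qed
  finally have A: "(\<Sum>v\<in>S. real (card (H (f v)))) \<le> n powr ((real l - 1) / real k) * n powr (1 / real k)" .
  have "real (card S) * n powr ((real l - 1) / real k) = (\<Sum>v\<in>S. n powr ((real l - 1) / real k))"
    by simp
  also have "\<dots> \<le> (\<Sum>v\<in>S. real (card (H (f v))))"
    using Sfacts by (intro sum_mono) (simp add: less_imp_le)
  finally have "real (card S) * n powr ((real l - 1) / real k)
      \<le> n powr (1 / real k) * n powr ((real l - 1) / real k)" using A by (simp add: mult.commute)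
  then have "real (card S) \<le> n powr (1 / real k)" using npos by simp
  then show ?thesis by (simp add: S_def C_def H_def n_def)
qed

end
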